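(* Consider the one-stage ANC game described in the context. Suppose that for every $x\in\mathbb{R}^n$ and $a\in\mathcal{A}$ the functions $u\mapsto\Sigma(F(x,0),u,a)$ and $u\mapsto\Sigma(F(x,u),u,a)$ are continuous, coercive and convex on $\mathbb{R}^m$, and that for every $x\in\mathbb{R}^n$, $s\in\mathcal{F}$ the function $H(u)\triangleq h^{x,s}(u)=[h^{x,s}_1(u),\dots,h^{x,s}_N(u)]'$ satisfies: there exist $u^*\in\mathbb{R}^m$ and a set $\mathcal{G}\subset\mathcal{A}$ with $|\mathcal{G}|\ge2$ such that (a) $H_i(u^* )=\max_{1\le j\le N}H_j(u^* )$ for all $i\in\mathcal{G}$; (b) for all $u\ne u^*$ there exists $i\in\mathcal{G}$ with $H_i(u)>H_i(u^* )$; (c) $u^*$ is not a minimum of any $H_i$, $i\in\mathcal{G}$. Then the one-stage ANC game has a non-pure saddle point $(u^*,p^* )$.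
   Context: Setting (one-stage ANC game). Let $\mathcal{F}=\{1,\dots,|\mathcal{F}|\}$ be a finite set of transmission regimes and $\mathcal{A}=\{1,\dots,N\}$ a finite set of jammer actions. For each $a\in\mathcal{A}$ let $P(a)$ be an $|\mathcal{F}|\times|\mathcal{F}|$ row-stochastic matrix, and let $q=(q_1,\dots,q_{|\mathcal{F}|})'\in[0,1]^{|\mathcal{F}|}$. Let $F:\mathbb{R}^n\times\mathbb{R}^m\to\mathbb{R}^n$, $\sigma^0:\mathbb{R}^n\times\mathbb{R}^m\to\mathbb{R}$, $\sigma^1:\mathbb{R}^n\to\mathbb{R}$, $g^0:\mathcal{A}\times\mathcal{F}\to\mathbb{R}$. For a plant state $x$ and regime $s$, the controller chooses $u\in\mathbb{R}^m$, the jammer chooses $p\in\mathcal{S}_{N-1}$ (unit simplex in $\mathbb{R}^N$); $a$ is drawn according to $p$, $s^+$ with $\mathrm{Pr}(s^+=i)=P_{si}(a)$, $b\in\{0,1\}$ with $\mathrm{Pr}(b=1\mid s^+)=q_{s^+}$, and $x^+=F(x,bu)$. Payoff $\Sigma(x^+,u,a)=\sigma^0(x,u)+\sigma^1(x^+)-g^0(a,s)$, with expectation $p'h^{x,s}(u)$ where $h^{x,s}_i(u)=(P(i)q)_s\Sigma(F(x,u),u,i)+(1-(P(i)q)_s)\Sigma(F(x,0),u,i)$. A saddle point is $(u^*,p^* )\in\mathbb{R}^m\times\mathcal{S}_{N-1}$ with $p'h^{x,s}(u^* )\le(p^* )'h^{x,s}(u^* )\le(p^* )'h^{x,s}(u)$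 for all $u,p$ (hence $(p^* )'h^{x,s}(u^* )=\inf_u\sup_pp'h^{x,s}(u)=\sup_p\inf_up'h^{x,s}(u)$). It is non-pure if $p^*$ has at least two positive components. A function $h:\mathbb{R}^m\to\mathbb{R}$ is coercive if $h(u)\ge\eta(\|u\|)$ for some $\eta$ with $\eta(y)\to+\infty$ as $y\to+\infty$. *)

theory Defs
  imports "HOL-Analysis.Analysis"
begin

text \<open>Regimes are \<open>{1..K}\<close>, jammer actions are \<open>{1..N}\<close>.
  \<open>P a s i\<close> is the \<open>(s,i)\<close> entry of the matrix \<open>P(a)\<close>; \<open>q i\<close> is \<open>q_i\<close>.\<close>

definition coercive :: "('a::real_normed_vector \<Rightarrow> real) \<Rightarrow> bool" where
  "coercive h \<longleftrightarrow> (\<exists>\<eta>::real \<Rightarrow> real. filterlim \<eta> at_top at_top \<and> (\<forall>u. \<eta> (norm u) \<le> h u))"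

definition unit_simplex :: "nat \<Rightarrow> (nat \<Rightarrow> real) set" where
  "unit_simplex N = {p. (\<forall>i\<in>{1..N}. 0 \<le> p i) \<and> (\<Sum>i=1..N. p i) = 1}"

definition row_stochastic :: "nat \<Rightarrow> (nat \<Rightarrow> nat \<Rightarrow> real) \<Rightarrow> bool" where
  "row_stochastic K M \<longleftrightarrow>
     (\<forall>s\<in>{1..K}. (\<forall>i\<in>{1..K}. 0 \<le> M s i) \<and> (\<Sum>i=1..K. M s i) = 1)"

definition anc_Sigma ::
  "('x \<Rightarrow> 'u \<Rightarrow> real) \<Rightarrow> ('x \<Rightarrow> real) \<Rightarrow> (nat \<Rightarrow> nat \<Rightarrow> real)
   \<Rightarrow> 'x \<Rightarrow> nat \<Rightarrow> 'x \<Rightarrow> 'u \<Rightarrow> nat \<Rightarrow> real" where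
  "anc_Sigma \<sigma>0 \<sigma>1 g0 x s xp u a = \<sigma>0 x u + \<sigma>1 xp - g0 a s"

definition anc_Pq :: "nat \<Rightarrow> (nat \<Rightarrow> nat \<Rightarrow> nat \<Rightarrow> real) \<Rightarrow> (nat \<Rightarrow> real) \<Rightarrow> nat \<Rightarrow> nat \<Rightarrow> real" where
  "anc_Pq K P q a s = (\<Sum>i=1..K. P a s i * q i)"

definition anc_h ::
  "nat \<Rightarrow> (nat \<Rightarrow> nat \<Rightarrow> nat \<Rightarrow> real) \<Rightarrow> (nat \<Rightarrow> real)
   \<Rightarrow> ('x \<Rightarrow> 'u::zero \<Rightarrow> 'x) \<Rightarrow> ('x \<Rightarrow> 'u \<Rightarrow> real) \<Rightarrow> ('x \<Rightarrow> real) \<Rightarrow> (nat \<Rightarrow> nat \<Rightarrow> real)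
   \<Rightarrow> 'x \<Rightarrow> nat \<Rightarrow> nat \<Rightarrow> 'u \<Rightarrow> real" where
  "anc_h K P q Fd \<sigma>0 \<sigma>1 g0 x s a u =
     anc_Pq K P q a s * anc_Sigma \<sigma>0 \<sigma>1 g0 x s (Fd x u) u a
     + (1 - anc_Pq K P q a s) * anc_Sigma \<sigma>0 \<sigma>1 g0 x s (Fd x 0) u a"

definition exp_payoff :: "nat \<Rightarrow> (nat \<Rightarrow> 'u \<Rightarrow> real) \<Rightarrow> (nat \<Rightarrow> real) \<Rightarrow> 'u \<Rightarrow> real" where
  "exp_payoff N H p u = (\<Sum>i=1..N. p i * H i u)"

definition saddle_point :: "nat \<Rightarrow> (nat \<Rightarrow> 'u \<Rightarrow> real) \<Rightarrow> 'u \<Rightarrow> (nat \<Rightarrow> real) \<Rightarrow> bool" where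
  "saddle_point N H us ps \<longleftrightarrow> ps \<in> unit_simplex N \<and>
     (\<forall>p\<in>unit_simplex N. \<forall>u. exp_payoff N H p us \<le> exp_payoff N H ps us
                              \<and> exp_payoff N H ps us \<le> exp_payoff N H ps u)"

definition non_pure :: "nat \<Rightarrow> (nat \<Rightarrow> real) \<Rightarrow> bool" where
  "non_pure N p \<longleftrightarrow> (\<exists>i\<in>{1..N}. \<exists>j\<in>{1..N}. i \<noteq> j \<and> 0 < p i \<and> 0 < p j)"

end

theory Submission
  imports Defs
begin

lemma two_convex:
  fixes f g :: "'a::real_vector \<Rightarrow> real"
  assumes cf: "convex_on UNIV f" and cg: "convex_on UNIV g"
    and pos: "\<And>u. 0 \<le> f u \<or> 0 \<le> g u"
  shows "\<exists>\<mu>. 0 \<le> \<mu> \<and> \<mu> \<le> 1 \<and> (\<forall>u. 0 \<le> \<mu> * f u + (1 - \<mu>) * g u)"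
proof -
  define S where "S = {y::real\<times>real. \<exists>u. f u \<le> fst y \<and> g u \<le> snd y}"
  define T where "T = {y::real\<times>real. fst y < 0 \<and> snd y < 0}"
  have cS: "convex S"
    unfolding convex_def S_def
  proof (clarsimp)
    fix a b c d :: real and s t :: real and u v
    assume h: "0 \<le> s" "0 \<le> t" "s + t = 1" "f u \<le> a" "g u \<le> b" "f v \<le> c" "g v \<le> d"
    have "f (s *\<^sub>R u + t *\<^sub>R v) \<le> s * f u + t * f v"
      proof -
      have "s = 1 - t" using h by simp
      then show ?thesis using convex_onD[OF cf, of t u v] h by (simp only: UNIV_I simp_thms)
    qed
    moreover have "g (s *\<^sub>R u + t *\<^sub>R v) \<le> s * g u + t * g v"
      proof -
      have "s = 1 - t" using h by simp
      then show ?thesis using convex_onD[OF cg, of t u v] h by (simp only: UNIV_I simp_thms)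
    qed
    moreover have "s * f u + t * f v \<le> s * a + t * c" "s * g u + t * g v \<le> s * b + t * d"
      using h by (simp_all add: add_mono mult_left_mono)
    ultimately show "\<exists>w. f w \<le> s * a + t * c \<and> g w \<le> s * b + t * d"
      by (intro exI[of _ "s *\<^sub>R u + t *\<^sub>R v"]) (meson order_trans)
  qed
  have cT: "convex T"
    unfolding convex_def T_def
  proof (clarsimp)
    fix a b c d s t :: real
    assume h: "0 \<le> s" "0 \<le> t" "s + t = 1" "a < 0" "b < 0" "c < 0" "d < 0"
    show "s * a + t * c < 0 \<and> s * b + t * d < 0"
    proof (cases "s = 0")
      case True then show ?thesis using h by simp
    next
      case False
      then have "s > 0" using h by simp
      then have "s * a < 0" "s * b < 0" using h by (simp_all add: mult_pos_neg)
      moreover have "t * c \<le> 0" "t * d \<le> 0" using h by (simp_all add: mult_nonneg_nonpos)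
      ultimately show ?thesis by simp
    qed
  qed
  have "(f 0, g 0) \<in> S" unfolding S_def by auto
  moreover have "(-1, -1) \<in> T" unfolding T_def by auto
  moreover have "S \<inter> T = {}"
    unfolding S_def T_def using pos by (fastforce dest: order.trans)
  ultimately obtain a b where ab: "a \<noteq> 0" "\<forall>x\<in>S. inner a x \<le> b" "\<forall>x\<in>T. inner a x \<ge> b"
    using separating_hyperplane_sets[OF cS cT] by blast
  obtain a1 a2 where a: "a = (a1, a2)" by fastforce
  have Tb: "a1 * y1 + a2 * y2 \<ge> b" if "y1 < 0" "y2 < 0" for y1 y2
    using ab(3) that unfolding T_def a by auto
  have Sb: "a1 * f u + a2 * g u \<le> b" for u
    using ab(2) unfolding S_def a by auto
  have a1: "a1 \<le> 0"
  proof (rule ccontr)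
    assume "\<not> a1 \<le> 0"
    then have "a1 > 0" by simp
    define t where "t = (\<bar>b\<bar> + \<bar>a2\<bar> + 1) / a1"
    have "t > 0" using \<open>a1 > 0\<close> unfolding t_def by simp
    have "a1 * t = \<bar>b\<bar> + \<bar>a2\<bar> + 1" using \<open>a1 > 0\<close> unfolding t_def by simp
    moreover have "a1 * (-t) + a2 * (-1) \<ge> b" using Tb[of "-t" "-1"] \<open>t > 0\<close> by simp
    ultimately show False by (simp add: abs_if split: if_splits)
  qed
  have a2: "a2 \<le> 0"
  proof (rule ccontr)
    assume "\<not> a2 \<le> 0"
    then have "a2 > 0" by simp
    define t where "t = (\<bar>b\<bar> + \<bar>a1\<bar> + 1) / a2"
    have "t > 0" using \<open>a2 > 0\<close> unfolding t_def by simp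
    have "a2 * t = \<bar>b\<bar> + \<bar>a1\<bar> + 1" using \<open>a2 > 0\<close> unfolding t_def by simp
    moreover have "a1 * (-1) + a2 * (-t) \<ge> b" using Tb[of "-1" "-t"] \<open>t > 0\<close> by simp
    ultimately show False by (simp add: abs_if split: if_splits)
  qed
  have sneg: "a1 + a2 < 0" using a1 a2 ab(1) a by (auto simp: zero_prod_def)
  have key: "a1 * f u + a2 * g u \<le> 0" for u
  proof (rule ccontr)
    assume "\<not> ?thesis"
    then have c: "a1 * f u + a2 * g u > 0" by simp
    define e where "e = (a1 * f u + a2 * g u) / (1 - (a1 + a2))"
    have e0: "e > 0" using c sneg unfolding e_def by simp
    have "e * (1 - (a1 + a2)) = a1 * f u + a2 * g u" using sneg unfolding e_def by simp
    then have "- e * (a1 + a2) < a1 * f u + a2 * g u" using e0 by (simp add: algebra_simps)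
    moreover have "a1 * (-e) + a2 * (-e) \<ge> b" using Tb[of "-e" "-e"] e0 by simp
    ultimately show False using Sb[of u] by (simp add: algebra_simps)
  qed
  define \<mu> where "\<mu> = a1 / (a1 + a2)"
  have "0 \<le> \<mu>" "\<mu> \<le> 1" unfolding \<mu>_def using a1 a2 sneg
    by (simp_all add: divide_nonpos_neg divide_le_eq)
  moreover have "0 \<le> \<mu> * f u + (1 - \<mu>) * g u" for u
  proof -
    have "1 - \<mu> = a2 / (a1 + a2)" unfolding \<mu>_def using sneg by (simp add: field_simps)
    then have "\<mu> * f u + (1 - \<mu>) * g u = (a1 * f u + a2 * g u) / (a1 + a2)"
      unfolding \<mu>_def by (simp add: add_divide_distrib)
    also have "\<dots> \<ge> 0" using key[of u] sneg by (simp add: divide_nonpos_neg)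
    finally show ?thesis .
  qed
  ultimately show ?thesis by blast
qed

lemma convex_on_Max:
  fixes f :: "nat \<Rightarrow> 'a::real_vector \<Rightarrow> real"
  assumes "finite G" "G \<noteq> {}" "\<And>i. i \<in> G \<Longrightarrow> convex_on UNIV (f i)"
  shows "convex_on UNIV (\<lambda>u. Max ((\<lambda>i. f i u) ` G))"
proof (rule convex_onI)
  fix t :: real and x y :: 'a
  assume t: "0 < t" "t < 1"
  obtain i where i: "i \<in> G" "f i ((1 - t) *\<^sub>R x + t *\<^sub>R y) = Max ((\<lambda>i. f i ((1 - t) *\<^sub>R x + t *\<^sub>R y)) ` G)"
  proof -
    have "Max ((\<lambda>i. f i ((1 - t) *\<^sub>R x + t *\<^sub>R y)) ` G) \<in> (\<lambda>i. f i ((1 - t) *\<^sub>R x + t *\<^sub>R y)) ` G"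
      by (rule Max_in) (use assms(1,2) in auto)
    then obtain k where "Max ((\<lambda>i. f i ((1 - t) *\<^sub>R x + t *\<^sub>R y)) ` G) = f k ((1 - t) *\<^sub>R x + t *\<^sub>R y)" "k \<in> G"
      by (rule imageE)
    then show ?thesis using that[of k] by simp
  qed
  have "f i ((1 - t) *\<^sub>R x + t *\<^sub>R y) \<le> (1 - t) * f i x + t * f i y"
    using convex_onD[OF assms(3)[OF i(1)], of t x y] t by simp
  also have "\<dots> \<le> (1 - t) * Max ((\<lambda>i. f i x) ` G) + t * Max ((\<lambda>i. f i y) ` G)"
    using t i(1) assms(1) by (intro add_mono mult_left_mono) auto
  finally show "Max ((\<lambda>i. f i ((1 - t) *\<^sub>R x + t *\<^sub>R y)) ` G) \<le> (1 - t) * Max ((\<lambda>i. f i x) ` G) + t * Max ((\<lambda>i. f i y) ` G)"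
    using i(2) by simp
qed simp

lemma many_convex:
  fixes G :: "nat set"
  assumes "finite G" "G \<noteq> {}"
  shows "\<forall>f :: nat \<Rightarrow> 'a::real_vector \<Rightarrow> real. (\<forall>i\<in>G. convex_on UNIV (f i)) \<longrightarrow>
     (\<forall>u. \<exists>i\<in>G. 0 \<le> f i u) \<longrightarrow>
     (\<exists>l. (\<forall>i\<in>G. 0 \<le> l i) \<and> sum l G = 1 \<and> (\<forall>u. 0 \<le> (\<Sum>i\<in>G. l i * f i u)))"
  using assms
proof (induction G rule: finite_ne_induct)
  case (singleton j)
  show ?case
  proof (intro allI impI)
    fix f :: "nat \<Rightarrow> 'a \<Rightarrow> real"
    assume "\<forall>u. \<exists>i\<in>{j}. 0 \<le> f i u"
    then show "\<exists>l. (\<forall>i\<in>{j}. 0 \<le> l i) \<and> sum l {j} = 1 \<and> (\<forall>u. 0 \<le> (\<Sum>i\<in>{j}. l i * f i u))"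
      by (intro exI[of _ "\<lambda>_. 1"]) auto
  qed
next
  case (insert j G)
  show ?case
  proof (intro allI impI)
    fix f :: "nat \<Rightarrow> 'a \<Rightarrow> real"
    assume cv: "\<forall>i\<in>insert j G. convex_on UNIV (f i)" and pos: "\<forall>u. \<exists>i\<in>insert j G. 0 \<le> f i u"
    define g where "g u = Max ((\<lambda>i. f i u) ` G)" for u
    have cg: "convex_on UNIV g" unfolding g_def
      using convex_on_Max[of G f] insert.hyps cv by auto
    have gi: "f i u \<le> g u" if "i \<in> G" for i u
      unfolding g_def using insert(1) that by auto
    have "0 \<le> g u \<or> 0 \<le> f j u" for u
    proof -
      obtain i where "i \<in> insert j G" "0 \<le> f i u" using pos by blast
      then show ?thesis using gi[of i u] by auto
    qed
    then obtain \<mu> where mu: "0 \<le> \<mu>" "\<mu> \<le> 1" "\<And>u. 0 \<le> \<mu> * g u + (1 - \<mu>) * f j u"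
      using two_convex[OF cg, of "f j"] cv by auto
    define h where "h i u = \<mu> * f i u + (1 - \<mu>) * f j u" for i u
    have ch: "\<forall>i\<in>G. convex_on UNIV (h i)"
      unfolding h_def using cv mu by (intro ballI convex_on_add convex_on_cmul) auto
    have ph: "\<forall>u. \<exists>i\<in>G. 0 \<le> h i u"
    proof
      fix u
      have "g u \<in> (\<lambda>i. f i u) ` G" unfolding g_def by (rule Max_in) (use insert.hyps in auto)
      then obtain i where "g u = f i u" "i \<in> G" by (rule imageE)
      then show "\<exists>i\<in>G. 0 \<le> h i u" using mu(3)[of u] unfolding h_def by (metis)
    qed
    obtain l where l: "\<forall>i\<in>G. 0 \<le> l i" "sum l G = 1" "\<forall>u. 0 \<le> (\<Sum>i\<in>G. l i * h i u)"
      using mp[OF mp[OF spec[OF insert.IH, of h] ch] ph] by (elim exE conjE) (rule that)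
    define l' where "l' i = (if i = j then 1 - \<mu> else \<mu> * l i)" for i
    have s1: "sum l' G = \<mu>"
    proof -
      have "sum l' G = (\<Sum>i\<in>G. \<mu> * l i)" unfolding l'_def using insert(3) by (intro sum.cong) auto
      also have "\<dots> = \<mu>" using l(2) sum_distrib_left[of \<mu> l G] by simp
      finally show ?thesis .
    qed
    have eq: "(\<Sum>i\<in>insert j G. l' i * f i u) = (\<Sum>i\<in>G. l i * h i u)" for u
    proof -
      have "(\<Sum>i\<in>insert j G. l' i * f i u) = (1 - \<mu>) * f j u + (\<Sum>i\<in>G. \<mu> * l i * f i u)"
        using insert(1,3) unfolding l'_def by (auto intro!: sum.cong)
      also have "\<dots> = (\<Sum>i\<in>G. l i * h i u)"
      proof -
        have "(\<Sum>i\<in>G. l i * h i u) = (\<Sum>i\<in>G. \<mu> * l i * f i u + l i * ((1 - \<mu>) * f j u))"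
          unfolding h_def by (intro sum.cong) (auto simp: distrib_left)
        also have "\<dots> = (\<Sum>i\<in>G. \<mu> * l i * f i u) + (\<Sum>i\<in>G. l i) * ((1 - \<mu>) * f j u)"
          by (simp add: sum.distrib sum_distrib_right)
        finally show ?thesis using l(2) by simp
      qed
      finally show ?thesis .
    qed
    have nn: "\<forall>i\<in>insert j G. 0 \<le> l' i" unfolding l'_def using l(1) mu by auto
    have s2: "sum l' (insert j G) = 1" using insert(1,3) s1 by (simp add: l'_def[of j])
    show "\<exists>l. (\<forall>i\<in>insert j G. 0 \<le> l i) \<and> sum l (insert j G) = 1 \<and> (\<forall>u. 0 \<le> (\<Sum>i\<in>insert j G. l i * f i u))"
      using nn s2 eq l(3) by (intro exI[of _ l'] conjI) simp_all
  qed
qed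

lemma Pq_bounds:
  assumes "row_stochastic K (P a)" "\<forall>i\<in>{1..K}. 0 \<le> q i \<and> q i \<le> 1" "s \<in> {1..K}"
  shows "0 \<le> anc_Pq K P q a s" "anc_Pq K P q a s \<le> 1"
proof -
  have r: "\<forall>i\<in>{1..K}. 0 \<le> P a s i" "(\<Sum>i=1..K. P a s i) = 1"
    using assms(1,3) unfolding row_stochastic_def by auto
  show "0 \<le> anc_Pq K P q a s" unfolding anc_Pq_def
    using r assms(2) by (intro sum_nonneg) auto
  have "anc_Pq K P q a s \<le> (\<Sum>i=1..K. P a s i)" unfolding anc_Pq_def
    using r assms(2) by (intro sum_mono) (auto intro: mult_left_le)
  then show "anc_Pq K P q a s \<le> 1" using r by simp
qed

theorem theorem2:
  fixes K N :: nat
    and P :: "nat \<Rightarrow> nat \<Rightarrow> nat \<Rightarrow> real"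
    and q :: "nat \<Rightarrow> real"
    and Fd :: "real^'n \<Rightarrow> real^'m \<Rightarrow> real^'n"
    and \<sigma>0 :: "real^'n \<Rightarrow> real^'m \<Rightarrow> real"
    and \<sigma>1 :: "real^'n \<Rightarrow> real"
    and g0 :: "nat \<Rightarrow> nat \<Rightarrow> real"
  assumes K: "1 \<le> K" and N: "1 \<le> N"
    and P: "\<forall>a\<in>{1..N}. row_stochastic K (P a)"
    and q: "\<forall>i\<in>{1..K}. 0 \<le> q i \<and> q i \<le> 1"
    and reg0: "\<forall>x s a. s \<in> {1..K} \<longrightarrow> a \<in> {1..N} \<longrightarrow>
       (let f = (\<lambda>u. anc_Sigma \<sigma>0 \<sigma>1 g0 x s (Fd x 0) u a) in
          continuous_on UNIV f \<and> coercive f \<and> convex_on UNIV f)"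
    and reg1: "\<forall>x s a. s \<in> {1..K} \<longrightarrow> a \<in> {1..N} \<longrightarrow>
       (let f = (\<lambda>u. anc_Sigma \<sigma>0 \<sigma>1 g0 x s (Fd x u) u a) in
          continuous_on UNIV f \<and> coercive f \<and> convex_on UNIV f)"
    and Hcond: "\<forall>x. \<forall>s\<in>{1..K}. let H = anc_h K P q Fd \<sigma>0 \<sigma>1 g0 x s in
       \<exists>us G. G \<subseteq> {1..N} \<and> 2 \<le> card G
         \<and> (\<forall>i\<in>G. H i us = Max ((\<lambda>j. H j us) ` {1..N}))
         \<and> (\<forall>u. u \<noteq> us \<longrightarrow> (\<exists>i\<in>G. H i u > H i us))
         \<and> (\<forall>i\<in>G. \<not> (\<forall>u. H i us \<le> H i u))"
  shows "\<forall>x. \<forall>s\<in>{1..K}. let H = anc_h K P q Fd \<sigma>0 \<sigma>1 g0 x s in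
       \<exists>us ps. saddle_point N H us ps \<and> non_pure N ps"

proof (intro allI ballI)
  fix x s
  assume s: "s \<in> {1..K}"
  define H where "H = anc_h K P q Fd \<sigma>0 \<sigma>1 g0 x s"
  obtain us G where G: "G \<subseteq> {1..N}" "2 \<le> card G"
      and a: "\<forall>i\<in>G. H i us = Max ((\<lambda>j. H j us) ` {1..N})"
      and b: "\<forall>u. u \<noteq> us \<longrightarrow> (\<exists>i\<in>G. H i u > H i us)"
      and c: "\<forall>i\<in>G. \<not> (\<forall>u. H i us \<le> H i u)"
  proof -
    have "let H = anc_h K P q Fd \<sigma>0 \<sigma>1 g0 x s in
       \<exists>us G. G \<subseteq> {1..N} \<and> 2 \<le> card G
         \<and> (\<forall>i\<in>G. H i us = Max ((\<lambda>j. H j us) ` {1..N}))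
         \<and> (\<forall>u. u \<noteq> us \<longrightarrow> (\<exists>i\<in>G. H i u > H i us))
         \<and> (\<forall>i\<in>G. \<not> (\<forall>u. H i us \<le> H i u))"
      by (rule Hcond[rule_format, OF s])
    then have "\<exists>us G. G \<subseteq> {1..N} \<and> 2 \<le> card G
         \<and> (\<forall>i\<in>G. H i us = Max ((\<lambda>j. H j us) ` {1..N}))
         \<and> (\<forall>u. u \<noteq> us \<longrightarrow> (\<exists>i\<in>G. H i u > H i us))
         \<and> (\<forall>i\<in>G. \<not> (\<forall>u. H i us \<le> H i u))"
      unfolding Let_def H_def .
    then show ?thesis using that by blast
  qed
  define M where "M = Max ((\<lambda>j. H j us) ` {1..N})"
  have fG: "finite G" using G(1) finite_subset by blast
  have neG: "G \<noteq> {}" using G(2) by auto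
  have HM: "H j us \<le> M" if "j \<in> {1..N}" for j
    unfolding M_def using that by auto
  have cH: "convex_on UNIV (H a)" if "a \<in> {1..N}" for a
  proof -
    have pq: "0 \<le> anc_Pq K P q a s" "anc_Pq K P q a s \<le> 1"
      using Pq_bounds[of K P a q s] P q s that by auto
    have c0: "convex_on UNIV (\<lambda>u. anc_Sigma \<sigma>0 \<sigma>1 g0 x s (Fd x 0) u a)"
      using reg0[rule_format, where x=x, OF s that] unfolding Let_def by (elim conjE)
    have c1: "convex_on UNIV (\<lambda>u. anc_Sigma \<sigma>0 \<sigma>1 g0 x s (Fd x u) u a)"
      using reg1[rule_format, where x=x, OF s that] unfolding Let_def by (elim conjE)
    show ?thesis unfolding H_def anc_h_def
      using pq c0 c1 by (intro convex_on_add convex_on_cmul) auto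
  qed
  define f where "f i u = H i u + (- M)" for i u
  have cf: "\<forall>i\<in>G. convex_on UNIV (f i)"
    unfolding f_def using G(1) cH by (intro ballI convex_on_add) (auto simp: convex_on_const)
  have pf: "\<forall>u. \<exists>i\<in>G. 0 \<le> f i u"
  proof
    fix u
    show "\<exists>i\<in>G. 0 \<le> f i u"
    proof (cases "u = us")
      case True
      then show ?thesis using neG a unfolding f_def M_def by auto
    next
      case False
      then obtain i where "i \<in> G" "H i u > H i us" using b by blast
      then show ?thesis using a unfolding f_def M_def by (intro bexI[of _ i]) auto
    qed
  qed
  obtain l where l: "\<forall>i\<in>G. 0 \<le> l i" "sum l G = 1" "\<forall>u. 0 \<le> (\<Sum>i\<in>G. l i * f i u)"
    using many_convex[OF fG neG] cf pf by blast
  define ps where "ps i = (if i \<in> G then l i else 0)" for i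
  have eps: "exp_payoff N H ps u = (\<Sum>i\<in>G. l i * H i u)" for u
  proof -
    have "exp_payoff N H ps u = (\<Sum>i\<in>{1..N}. if i \<in> G then l i * H i u else 0)"
      unfolding exp_payoff_def ps_def by (intro sum.cong) auto
    also have "\<dots> = (\<Sum>i\<in>{1..N} \<inter> G. l i * H i u)"
      by (simp add: sum.inter_restrict)
    also have "{1..N} \<inter> G = G" using G(1) by auto
    finally show ?thesis .
  qed
  have sps: "(\<Sum>i=1..N. ps i) = 1"
  proof -
    have "(\<Sum>i=1..N. ps i) = (\<Sum>i\<in>{1..N}. if i \<in> G then l i else 0)"
      unfolding ps_def by simp
    also have "\<dots> = (\<Sum>i\<in>{1..N} \<inter> G. l i)"
      by (simp add: sum.inter_restrict)
    also have "{1..N} \<inter> G = G" using G(1) by auto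
    finally show ?thesis using l(2) by simp
  qed
  have psS: "ps \<in> unit_simplex N"
    unfolding unit_simplex_def using sps l(1) by (auto simp: ps_def)
  have val: "exp_payoff N H ps us = M"
  proof -
    have "exp_payoff N H ps us = (\<Sum>i\<in>G. l i * M)"
      unfolding eps using a unfolding M_def by (intro sum.cong) auto
    also have "\<dots> = M" using l(2) by (simp add: sum_distrib_right[symmetric])
    finally show ?thesis .
  qed
  have lower: "M \<le> exp_payoff N H ps u" for u
  proof -
    have "0 \<le> (\<Sum>i\<in>G. l i * f i u)" using l(3) by blast
    also have "\<dots> = (\<Sum>i\<in>G. l i * H i u) - (\<Sum>i\<in>G. l i) * M"
      unfolding f_def by (simp add: right_diff_distrib sum_subtractf sum_distrib_right)
    finally show ?thesis using l(2) eps by simp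
  qed
  have upper: "exp_payoff N H p us \<le> M" if "p \<in> unit_simplex N" for p
  proof -
    have p: "\<forall>i\<in>{1..N}. 0 \<le> p i" "(\<Sum>i=1..N. p i) = 1" using that unfolding unit_simplex_def by auto
    have "exp_payoff N H p us \<le> (\<Sum>i=1..N. p i * M)"
      unfolding exp_payoff_def using p HM by (intro sum_mono mult_left_mono) auto
    also have "\<dots> = M" using p(2) by (simp add: sum_distrib_right[symmetric])
    finally show ?thesis .
  qed
  have sp: "saddle_point N H us ps"
    unfolding saddle_point_def using psS upper lower val by auto
  have np: "non_pure N ps"
  proof -
    obtain i where i: "i \<in> G" "l i \<noteq> 0"
    proof -
      have "\<not> (\<forall>x\<in>G. l x = 0)" using l(2) sum.neutral[of G l] by linarith
      then show ?thesis using that by blast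
    qed
    have "\<exists>j\<in>G. j \<noteq> i \<and> l j \<noteq> 0"
    proof (rule ccontr)
      assume "\<not> ?thesis"
      then have z: "\<forall>j\<in>G. j \<noteq> i \<longrightarrow> l j = 0" by blast
      have sumi: "(\<Sum>j\<in>G. g j) = g i" if "\<forall>j\<in>G. j \<noteq> i \<longrightarrow> g j = 0" for g :: "nat \<Rightarrow> real"
        using sum.remove[OF fG i(1), of g] that by (simp add: sum.neutral)
      have li: "l i = 1" using sumi[of l] z l(2) by simp
      have "H i us \<le> H i u" for u
      proof -
        have "0 \<le> (\<Sum>j\<in>G. l j * f j u)" using l(3) by blast
        also have "\<dots> = l i * f i u" using sumi[of "\<lambda>j. l j * f j u"] z by simp
        finally have "0 \<le> f i u" using li by simp
        then show ?thesis using a i(1) unfolding f_def M_def by auto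
      qed
      then show False using c i(1) by blast
    qed
    then obtain j where j: "j \<in> G" "j \<noteq> i" "l j \<noteq> 0" by blast
    have "0 < ps i" "0 < ps j" using i j l(1) unfolding ps_def by force+
    then show ?thesis unfolding non_pure_def using i(1) j G(1) by blast
  qed
  show "let H = anc_h K P q Fd \<sigma>0 \<sigma>1 g0 x s in \<exists>us ps. saddle_point N H us ps \<and> non_pure N ps"
  proof -
    have "\<exists>us ps. saddle_point N H us ps \<and> non_pure N ps" using sp np by (intro exI conjI)
    then show ?thesis unfolding H_def Let_def .
  qed
qed

end
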